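(* Assume $k = 1$ (a single item). Let $A$ be any implementable allocation rule. Among all payment rules $P$ that implement $A$ and are ex-post individually rational, the winner-pays-bid payment rule $P^{\mathrm{WPB}}$ minimizes $\mathbb E[g(R)]$ for every convex function $g : \mathbb R \to \mathbb R$, where $R = \sum_i P_i(\bm v)$. That is, $\mathbb E[g(\sum_i P_i^{\mathrm{WPB}}(\bm v))] \le \mathbb E[g(\sum_i P_i(\bm v))]$ for every such $P$ and every convex $g$ for which these expectations exist.
   Context: Setting: $n$ risk-neutral unit-demand bidders and $k$ identical items, $1 \le k < n$. Bidder $i$ has private value $v_i \in \mathcal V_i = [0,\bar v_i]$, drawn independently across bidders from a distribution $F_i$ with density $f_i > 0$ on $\mathcal V_i$; $\bm v = (v_1,\dots,v_n)$, $\mathcal V = \prod_i \mathcal V_i$. An allocation rule is a measurable map $A : \mathcal V \to \{0,1\}^n$ with $\sum_i A_i(\bm v) \le k$. Its interim allocation is $x_i(v_i) = \mathbb E[A_i(\bm v) \mid v_i]$, and $A$ is called implementable if every $x_i$ is non-decreasing. Its interim payment function is $z_i(v_i) = v_i x_i(v_i) - \int_0^{v_i} x_i(u)\,du$. A payment rule is a measurable map $P : \mathcal V \to [0,\infty)^n$ (payments are non-negative). $P$ implements $A$ if $(A,P)$ is Bayesian incentive compatible, i.e. $\mathbb E[v_i A_i(\bm v) - P_i(\bm v) \mid v_i] \ge \mathbb E[v_i A_i(v_i',\bm v_{-i}) - P_i(v_i',\bm v_{-i}) \mid v_i]$ for all $i, v_i, v_i'$, and satisfies revenue equivalence $\mathbb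 E[P_i(\bm v) \mid v_i] = z_i(v_i)$ for all $i, v_i$. $P$ is ex-post individually rational if $v_i A_i(\bm v) - P_i(\bm v) \ge 0$ for all $i$ and $\bm v$. The winner-pays-bid (WPB) payment rule is $P_i^{\mathrm{WPB}}(\bm v) = b_i^{\mathrm{WPB}}(v_i) A_i(\bm v)$ with $b_i^{\mathrm{WPB}}(v_i) = z_i(v_i)/x_i(v_i)$ when $x_i(v_i) > 0$ and $b_i^{\mathrm{WPB}}(v_i) = 0$ otherwise. *)

theory Defs
  imports "HOL-Probability.Probability"
begin

definition value_space :: "nat set \<Rightarrow> (nat \<Rightarrow> real) \<Rightarrow> (nat \<Rightarrow> real) set" where
  "value_space I vbar = PiE I (\<lambda>i. {0..vbar i})"

definition valdist :: "(nat \<Rightarrow> real) \<Rightarrow> (nat \<Rightarrow> real \<Rightarrow> real) \<Rightarrow> nat \<Rightarrow> real measure" where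
  "valdist vbar f i = density lborel (\<lambda>x. ennreal (f i x * indicator {0..vbar i} x))"

(* E[h(v) | v_i = u] for independent values: integrate out the other bidders' values *)
definition interim :: "nat set \<Rightarrow> (nat \<Rightarrow> real measure) \<Rightarrow> nat \<Rightarrow> ((nat \<Rightarrow> real) \<Rightarrow> real) \<Rightarrow> real \<Rightarrow> real" where
  "interim I M i h u = (\<integral>w. h (w(i := u)) \<partial>(PiM (I - {i}) M))"

definition allocation_rule :: "nat set \<Rightarrow> (nat \<Rightarrow> real) \<Rightarrow> (nat \<Rightarrow> real measure) \<Rightarrow> nat
    \<Rightarrow> (nat \<Rightarrow> (nat \<Rightarrow> real) \<Rightarrow> real) \<Rightarrow> bool" where
  "allocation_rule I vbar M k A \<longleftrightarrow>
     (\<forall>i\<in>I. A i \<in> borel_measurable (PiM I M)) \<and>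
     (\<forall>v\<in>value_space I vbar. (\<forall>i\<in>I. A i v \<in> {0, 1}) \<and> (\<Sum>i\<in>I. A i v) \<le> real k)"

definition interim_alloc :: "nat set \<Rightarrow> (nat \<Rightarrow> real measure) \<Rightarrow> (nat \<Rightarrow> (nat \<Rightarrow> real) \<Rightarrow> real)
    \<Rightarrow> nat \<Rightarrow> real \<Rightarrow> real" where
  "interim_alloc I M A i u = interim I M i (A i) u"

definition interim_pay :: "nat set \<Rightarrow> (nat \<Rightarrow> real measure) \<Rightarrow> (nat \<Rightarrow> (nat \<Rightarrow> real) \<Rightarrow> real)
    \<Rightarrow> nat \<Rightarrow> real \<Rightarrow> real" where
  "interim_pay I M A i u =
     u * interim_alloc I M A i u - (LINT t:{0..u}|lborel. interim_alloc I M A i t)"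

definition implementable :: "nat set \<Rightarrow> (nat \<Rightarrow> real) \<Rightarrow> (nat \<Rightarrow> real measure)
    \<Rightarrow> (nat \<Rightarrow> (nat \<Rightarrow> real) \<Rightarrow> real) \<Rightarrow> bool" where
  "implementable I vbar M A \<longleftrightarrow> (\<forall>i\<in>I. mono_on {0..vbar i} (interim_alloc I M A i))"

definition payment_rule :: "nat set \<Rightarrow> (nat \<Rightarrow> real) \<Rightarrow> (nat \<Rightarrow> real measure)
    \<Rightarrow> (nat \<Rightarrow> (nat \<Rightarrow> real) \<Rightarrow> real) \<Rightarrow> bool" where
  "payment_rule I vbar M P \<longleftrightarrow>
     (\<forall>i\<in>I. P i \<in> borel_measurable (PiM I M)) \<and>
     (\<forall>v\<in>value_space I vbar. \<forall>i\<in>I. 0 \<le> P i v)"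

(* P implements A: Bayesian IC + revenue equivalence *)
definition implements :: "nat set \<Rightarrow> (nat \<Rightarrow> real) \<Rightarrow> (nat \<Rightarrow> real measure)
    \<Rightarrow> (nat \<Rightarrow> (nat \<Rightarrow> real) \<Rightarrow> real) \<Rightarrow> (nat \<Rightarrow> (nat \<Rightarrow> real) \<Rightarrow> real) \<Rightarrow> bool" where
  "implements I vbar M A P \<longleftrightarrow>
     payment_rule I vbar M P \<and>
     (\<forall>i\<in>I. \<forall>u\<in>{0..vbar i}. \<forall>u'\<in>{0..vbar i}.
        interim I M i (\<lambda>v. u * A i (v(i := u')) - P i (v(i := u'))) u
          \<le> interim I M i (\<lambda>v. v i * A i v - P i v) u) \<and>
     (\<forall>i\<in>I. \<forall>u\<in>{0..vbar i}.
        integrable (PiM (I - {i}) M) (\<lambda>w. P i (w(i := u))) \<and>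
        interim I M i (P i) u = interim_pay I M A i u)"

definition ex_post_IR :: "nat set \<Rightarrow> (nat \<Rightarrow> real)
    \<Rightarrow> (nat \<Rightarrow> (nat \<Rightarrow> real) \<Rightarrow> real) \<Rightarrow> (nat \<Rightarrow> (nat \<Rightarrow> real) \<Rightarrow> real) \<Rightarrow> bool" where
  "ex_post_IR I vbar A P \<longleftrightarrow> (\<forall>v\<in>value_space I vbar. \<forall>i\<in>I. 0 \<le> v i * A i v - P i v)"

(* bids are only relevant on V_i = [0, vbar_i]; outside we set them to 0 *)
definition wpb_bid :: "nat set \<Rightarrow> (nat \<Rightarrow> real) \<Rightarrow> (nat \<Rightarrow> real measure) \<Rightarrow> (nat \<Rightarrow> (nat \<Rightarrow> real) \<Rightarrow> real)
    \<Rightarrow> nat \<Rightarrow> real \<Rightarrow> real" where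
  "wpb_bid I vbar M A i u =
     (if u \<in> {0..vbar i} \<and> 0 < interim_alloc I M A i u then interim_pay I M A i u / interim_alloc I M A i u else 0)"

definition wpb :: "nat set \<Rightarrow> (nat \<Rightarrow> real) \<Rightarrow> (nat \<Rightarrow> real measure) \<Rightarrow> (nat \<Rightarrow> (nat \<Rightarrow> real) \<Rightarrow> real)
    \<Rightarrow> nat \<Rightarrow> (nat \<Rightarrow> real) \<Rightarrow> real" where
  "wpb I vbar M A i v = wpb_bid I vbar M A i (v i) * A i v"

end

theory Submission
  imports Defs
begin



lemma mono_int_bounds:
  fixes x :: "real \<Rightarrow> real"
  assumes xm: "x \<in> borel_measurable borel" and mo: "mono_on {0..V} x"
    and bd: "\<And>t. t \<in> {0..V} \<Longrightarrow> \<bar>x t\<bar> \<le> B"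
    and ab: "0 \<le> a" "a \<le> b" "b \<le> V"
  shows "(b - a) * x a \<le> (LINT t:{0..b}|lborel. x t) - (LINT t:{0..a}|lborel. x t)"
    "(LINT t:{0..b}|lborel. x t) - (LINT t:{0..a}|lborel. x t) \<le> (b - a) * x b"
proof -
  have xm': "x \<in> borel_measurable lborel" using xm by simp
  have ib: "set_integrable lborel {0..b} x"
    unfolding set_integrable_def
    apply (rule integrableI_bounded_set_indicator[where B=B])
    using xm' bd ab by auto
  have ia: "set_integrable lborel {0..a} x"
    by (rule set_integrable_subset[OF ib]) (use ab in auto)
  have iab: "set_integrable lborel {a<..b} x"
    by (rule set_integrable_subset[OF ib]) (use ab in auto)
  have un: "{0..b} = {0..a} \<union> {a<..b}" using ab by auto
  have eq: "(LINT t:{0..b}|lborel. x t) - (LINT t:{0..a}|lborel. x t) = (LINT t:{a<..b}|lborel. x t)"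
    unfolding un by (subst set_integral_Un) (use ia iab in auto)
  have ci: "set_integrable lborel {a<..b} (\<lambda>_. c)" for c :: real
    unfolding set_integrable_def
    by (rule integrableI_bounded_set_indicator[where B="\<bar>c\<bar>"]) (use ab in auto)
  have cv: "(LINT t:{a<..b}|lborel. c) = (b - a) * c" for c :: real
    using ab by (subst set_integral_const) auto
  have "(LINT t:{a<..b}|lborel. x a) \<le> (LINT t:{a<..b}|lborel. x t)"
    by (rule set_integral_mono[OF ci iab]) (use ab in \<open>auto intro!: mono_onD[OF mo]\<close>)
  then show "(b - a) * x a \<le> (LINT t:{0..b}|lborel. x t) - (LINT t:{0..a}|lborel. x t)"
    using eq cv by simp
  have "(LINT t:{a<..b}|lborel. x t) \<le> (LINT t:{a<..b}|lborel. x b)"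
    by (rule set_integral_mono[OF iab ci]) (use ab in \<open>auto intro!: mono_onD[OF mo]\<close>)
  then show "(LINT t:{0..b}|lborel. x t) - (LINT t:{0..a}|lborel. x t) \<le> (b - a) * x b"
    using eq cv by simp
qed




locale auc =
  fixes n :: nat and vbar :: "nat \<Rightarrow> real" and f :: "nat \<Rightarrow> real \<Rightarrow> real"
    and A :: "nat \<Rightarrow> (nat \<Rightarrow> real) \<Rightarrow> real"
  assumes f_meas: "\<forall>i<n. f i \<in> borel_measurable lborel"
    and f_norm: "\<forall>i<n. (\<integral>\<^sup>+x\<in>{0..vbar i}. ennreal (f i x) \<partial>lborel) = 1"
    and A_rule: "allocation_rule {..<n} vbar (valdist vbar f) 1 A"
    and A_impl: "implementable {..<n} vbar (valdist vbar f) A"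
begin

abbreviation "M \<equiv> valdist vbar f"
definition "M' j = (if j < n then M j else return borel 0)"

lemma sets_M[measurable_cong]: "sets (M i) = sets borel"
  by (simp add: valdist_def)

lemma space_M[simp]: "space (M i) = UNIV"
  by (simp add: valdist_def)

lemma M_prob: "i < n \<Longrightarrow> prob_space (M i)"
proof (rule prob_spaceI)
  assume i: "i < n"
  have fi[measurable]: "f i \<in> borel_measurable borel" using f_meas i by simp
  have fm: "(\<lambda>x. ennreal (f i x * indicator {0..vbar i} x)) \<in> borel_measurable lborel"
    by measurable
  have "emeasure (M i) (space (M i)) = (\<integral>\<^sup>+ x. ennreal (f i x * indicator {0..vbar i} x) * indicator UNIV x \<partial>lborel)"
    unfolding valdist_def using fm by (subst emeasure_density) auto
  also have "\<dots> = (\<integral>\<^sup>+x\<in>{0..vbar i}. ennreal (f i x) \<partial>lborel)"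
    by (intro nn_integral_cong) (auto split: split_indicator)
  finally show "emeasure (M i) (space (M i)) = 1" using f_norm i by simp
qed

lemma M'_prob: "prob_space (M' j)"
  by (auto simp: M'_def M_prob intro: prob_space_return)

lemma P: "product_prob_space M'"
  unfolding product_prob_space_def product_prob_space_axioms_def product_sigma_finite_def
  using M'_prob by (auto intro: prob_space_imp_sigma_finite)

lemma PiM_M': "K \<subseteq> {..<n} \<Longrightarrow> PiM K M = PiM K M'"
  by (rule PiM_cong) (auto simp: M'_def)

lemma AE_M: "i < n \<Longrightarrow> AE u in M i. u \<in> {0..vbar i}"
proof -
  assume i: "i < n"
  have fi[measurable]: "f i \<in> borel_measurable borel" using f_meas i by simp
  have fm: "(\<lambda>x. ennreal (f i x * indicator {0..vbar i} x)) \<in> borel_measurable lborel"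
    by measurable
  show ?thesis unfolding valdist_def
    by (subst AE_density[OF fm]) (auto split: split_indicator)
qed

lemma AE_vals: "K \<subseteq> {..<n} \<Longrightarrow> AE w in PiM K M. \<forall>j\<in>K. w j \<in> {0..vbar j}"
proof -
  assume K: "K \<subseteq> {..<n}"
  have "AE w in PiM K M'. \<forall>j\<in>K. w j \<in> {0..vbar j}"
  proof (rule AE_finite_allI)
    show "finite K" using K finite_subset by blast
    fix j assume j: "j \<in> K"
    have "M' j = M j" using j K by (auto simp: M'_def)
    have "AE u in M j. u \<in> {0..vbar j}" using AE_M[of j] j K by auto
    then have "AE u in M' j. u \<in> {0..vbar j}" by (subst \<open>M' j = M j\<close>)
    then show "AE w in PiM K M'. w j \<in> {0..vbar j}"
      by (intro AE_PiM_component[of K M' j "\<lambda>u. u \<in> {0..vbar j}"] M'_prob j)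
  qed
  then show ?thesis unfolding PiM_M'[OF K] .
qed

lemma A_meas[measurable]: "i < n \<Longrightarrow> A i \<in> borel_measurable (PiM {..<n} M)"
  using A_rule by (auto simp: allocation_rule_def)

lemma upd_meas:
  assumes i: "i < n"
  shows "(\<lambda>p. (snd p)(i := fst p)) \<in> measurable (M i \<Otimes>\<^sub>M PiM ({..<n} - {i}) M) (PiM {..<n} M)"
  by (rule measurable_fun_upd[where J="{..<n} - {i}"]) (use i in auto)

lemma upd_meas1:
  assumes i: "i < n"
  shows "(\<lambda>w. w(i := u)) \<in> measurable (PiM ({..<n} - {i}) M) (PiM {..<n} M)"
  by (rule measurable_fun_upd[where J="{..<n} - {i}"]) (use i in auto)

lemma interim_meas:
  assumes i: "i < n" and h: "h \<in> borel_measurable (PiM {..<n} M)"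
  shows "interim {..<n} M i h \<in> borel_measurable borel"
proof -
  interpret Q: prob_space "PiM ({..<n} - {i}) M"
    by (rule prob_space_PiM) (auto intro: M_prob)
  have "(\<lambda>p. h ((snd p)(i := fst p))) \<in> borel_measurable (M i \<Otimes>\<^sub>M PiM ({..<n} - {i}) M)"
    using measurable_comp[OF upd_meas[OF i] h] by (simp add: comp_def)
  then have "(\<lambda>u. \<integral>w. h (w(i := u)) \<partial>PiM ({..<n} - {i}) M) \<in> borel_measurable (M i)"
    by (intro Q.borel_measurable_lebesgue_integral) (simp add: split_beta')
  then show ?thesis unfolding interim_def by (simp add: measurable_cong_sets[OF sets_M refl])
qed

lemma fubini:
  fixes h :: "(nat \<Rightarrow> real) \<Rightarrow> real"
  assumes i: "i < n" and h: "integrable (PiM {..<n} M) h"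
  shows "integral\<^sup>L (PiM {..<n} M) h = (\<integral>u. (\<integral>w. h (w(i := u)) \<partial>PiM ({..<n} - {i}) M) \<partial>M i)"
proof -
  interpret P: product_prob_space M' by (rule P)
  let ?J = "{..<n} - {i}"
  have U: "{..<n} = {i} \<union> ?J" using i by auto
  have hM': "integrable (PiM ({i} \<union> ?J) M') h" using h PiM_M'[of "{..<n}"] U by simp
  have "integral\<^sup>L (PiM {..<n} M) h = integral\<^sup>L (PiM ({i} \<union> ?J) M') h"
    using PiM_M'[of "{..<n}"] U by simp
  also have "\<dots> = (\<integral>x. (\<integral>y. h (merge {i} ?J (x, y)) \<partial>PiM ?J M') \<partial>PiM {i} M')"
    using P.product_integral_fold[of "{i}" ?J h] hM' by auto
  also have "\<dots> = (\<integral>x. (\<integral>y. h (y(i := x i)) \<partial>PiM ?J M') \<partial>PiM {i} M')"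
  proof (rule Bochner_Integration.integral_cong[OF refl], rule Bochner_Integration.integral_cong[OF refl])
    fix x y assume "x \<in> space (PiM {i} M')" "y \<in> space (PiM ?J M')"
    then show "h (merge {i} ?J (x, y)) = h (y(i := x i))"
      by (intro arg_cong[where f=h]) (auto simp: merge_def space_PiM PiE_def extensional_def fun_eq_iff)
  qed
  also have "\<dots> = (\<integral>u. (\<integral>y. h (y(i := u)) \<partial>PiM ?J M') \<partial>M' i)"
  proof (rule P.product_integral_singleton)
    interpret Q: prob_space "PiM ?J M'" by (rule prob_space_PiM) (rule M'_prob)
    have hm: "h \<in> borel_measurable (PiM {..<n} M)" using h by auto
    have "(\<lambda>p. h ((snd p)(i := fst p))) \<in> borel_measurable (M i \<Otimes>\<^sub>M PiM ?J M)"
      using measurable_comp[OF upd_meas[OF i] hm] by (simp add: comp_def)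
    then have "(\<lambda>p. h ((snd p)(i := fst p))) \<in> borel_measurable (M' i \<Otimes>\<^sub>M PiM ?J M')"
      using PiM_M'[of ?J] i by (simp add: M'_def)
    then show "(\<lambda>u. \<integral>y. h (y(i := u)) \<partial>PiM ?J M') \<in> borel_measurable (M' i)"
      by (intro Q.borel_measurable_lebesgue_integral) (simp add: split_beta')
  qed
  finally show ?thesis using PiM_M'[of ?J] i by (simp add: M'_def)
qed

end



context auc begin

abbreviation "xi i \<equiv> interim_alloc {..<n} M A i"
abbreviation "zi i \<equiv> interim_pay {..<n} M A i"
abbreviation "bi i \<equiv> wpb_bid {..<n} vbar M A i"
abbreviation "Xi i u \<equiv> LINT t:{0..u}|lborel. xi i t"

lemma Q_prob: "K \<subseteq> {..<n} \<Longrightarrow> prob_space (PiM K M)"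
  by (rule prob_space_PiM) (auto intro: M_prob)

lemma upd_vs:
  assumes i: "i < n" and u: "u \<in> {0..vbar i}" and w: "w \<in> space (PiM ({..<n} - {i}) M)"
    and wv: "\<forall>j\<in>{..<n} - {i}. w j \<in> {0..vbar j}"
  shows "w(i := u) \<in> value_space {..<n} vbar"
  using assms by (auto simp: value_space_def space_PiM PiE_def extensional_def)

lemma AE_upd:
  assumes i: "i < n" and u: "u \<in> {0..vbar i}"
  shows "AE w in PiM ({..<n} - {i}) M. w(i := u) \<in> value_space {..<n} vbar"
  using AE_vals[OF Diff_subset] AE_space
  by eventually_elim (use upd_vs[OF i u] in auto)

lemma A01: "v \<in> value_space {..<n} vbar \<Longrightarrow> i < n \<Longrightarrow> A i v \<in> {0, 1}"
  using A_rule by (auto simp: allocation_rule_def)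

lemma Asum: "v \<in> value_space {..<n} vbar \<Longrightarrow> (\<Sum>i<n. A i v) \<le> 1"
  using A_rule by (auto simp: allocation_rule_def)

lemma A_upd_meas[measurable]: "i < n \<Longrightarrow> j < n \<Longrightarrow> (\<lambda>w. A j (w(i := u))) \<in> borel_measurable (PiM ({..<n} - {i}) M)"
  using measurable_comp[OF upd_meas1 A_meas] by (simp add: comp_def)

lemma x_int:
  assumes i: "i < n" and u: "u \<in> {0..vbar i}"
  shows "integrable (PiM ({..<n} - {i}) M) (\<lambda>w. A i (w(i := u)))"
proof -
  interpret Q: prob_space "PiM ({..<n} - {i}) M" by (rule Q_prob) auto
  show ?thesis
  proof (rule Q.integrable_const_bound[where B=1])
    show "AE w in PiM ({..<n} - {i}) M. norm (A i (w(i := u))) \<le> 1"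
      using AE_upd[OF i u] by eventually_elim (use A01 i in fastforce)
  qed (use i in simp)
qed

lemma x_bounds:
  assumes i: "i < n" and u: "u \<in> {0..vbar i}"
  shows "0 \<le> xi i u" "xi i u \<le> 1"
proof -
  interpret Q: prob_space "PiM ({..<n} - {i}) M" by (rule Q_prob) auto
  have ae: "AE w in PiM ({..<n} - {i}) M. A i (w(i := u)) \<in> {0, 1}"
    using AE_upd[OF i u] by eventually_elim (use A01 i in fastforce)
  show "0 \<le> xi i u" unfolding interim_alloc_def interim_def
    by (rule integral_nonneg_AE) (use ae in \<open>eventually_elim, auto\<close>)
  have "xi i u \<le> (\<integral>w. 1 \<partial>PiM ({..<n} - {i}) M)" unfolding interim_alloc_def interim_def
    by (rule integral_mono_AE) (use ae x_int[OF i u] in \<open>auto elim!: eventually_mono\<close>)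
  then show "xi i u \<le> 1" by (simp add: Q.prob_space)
qed

lemma x_meas[measurable]: "i < n \<Longrightarrow> xi i \<in> borel_measurable borel"
  unfolding interim_alloc_def by (rule interim_meas) auto

lemma x_mono: "i < n \<Longrightarrow> mono_on {0..vbar i} (xi i)"
  using A_impl by (auto simp: implementable_def)

lemma X_meas[measurable]: "i < n \<Longrightarrow> (\<lambda>u. Xi i u) \<in> borel_measurable borel"
proof -
  assume i: "i < n"
  have "(\<lambda>p. indicator {0..fst p} (snd p) *\<^sub>R xi i (snd p)) \<in> borel_measurable (borel \<Otimes>\<^sub>M lborel)"
  proof -
    have "(\<lambda>p. indicator {0..fst p} (snd p) *\<^sub>R xi i (snd p)) = (\<lambda>p::real\<times>real. if 0 \<le> snd p \<and> snd p \<le> fst p then xi i (snd p) else 0)"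
      by (auto simp: fun_eq_iff split: split_indicator)
    moreover have "(\<lambda>p::real\<times>real. if 0 \<le> snd p \<and> snd p \<le> fst p then xi i (snd p) else 0) \<in> borel_measurable (borel \<Otimes>\<^sub>M lborel)"
      using i by measurable
    ultimately show ?thesis by simp
  qed
  then have "(\<lambda>u. \<integral>t. indicator {0..u} t *\<^sub>R xi i t \<partial>lborel) \<in> borel_measurable borel"
    by (intro lborel.borel_measurable_lebesgue_integral) (simp add: split_beta')
  then show ?thesis by (simp add: set_lebesgue_integral_def)
qed

lemma z_eq: "zi i u = u * xi i u - Xi i u"
  by (simp add: interim_pay_def)

lemma X_bounds:
  assumes i: "i < n" and ab: "0 \<le> a" "a \<le> b" "b \<le> vbar i"
  shows "(b - a) * xi i a \<le> Xi i b - Xi i a" "Xi i b - Xi i a \<le> (b - a) * xi i b"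
  using mono_int_bounds[OF x_meas[OF i] x_mono[OF i] _ ab, of 1] x_bounds[OF i] by auto

lemma X0: "Xi i 0 = 0"
  unfolding set_lebesgue_integral_def
  by (rule integral_eq_zero_AE) (use AE_lborel_singleton[of 0] in \<open>auto elim!: eventually_mono\<close>)

lemma z_bounds:
  assumes i: "i < n" and u: "u \<in> {0..vbar i}"
  shows "0 \<le> zi i u" "zi i u \<le> u * xi i u"
proof -
  have "u * xi i 0 \<le> Xi i u" "Xi i u \<le> u * xi i u"
    using X_bounds[OF i, of 0 u] u X0[of i] by auto
  moreover have "0 \<le> u * xi i 0" using x_bounds[OF i, of 0] u by auto
  ultimately show "0 \<le> zi i u" "zi i u \<le> u * xi i u" by (auto simp: z_eq)
qed

lemma b_props:
  assumes i: "i < n" and u: "u \<in> {0..vbar i}"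
  shows "0 \<le> bi i u" "bi i u \<le> u" "bi i u * xi i u = zi i u"
proof -
  note zb = z_bounds[OF i u] and xb = x_bounds[OF i u]
  show "0 \<le> bi i u" using zb xb u by (auto simp: wpb_bid_def)
  show "bi i u \<le> u" using zb xb u by (auto simp: wpb_bid_def divide_le_eq mult.commute)
  show "bi i u * xi i u = zi i u"
  proof (cases "0 < xi i u")
    case True then show ?thesis using u by (simp add: wpb_bid_def)
  next
    case False then have "xi i u = 0" using xb by auto
    then show ?thesis using zb u by (simp add: wpb_bid_def)
  qed
qed

lemma b_meas[measurable]: "i < n \<Longrightarrow> bi i \<in> borel_measurable borel"
proof -
  assume i: "i < n"
  have [measurable]: "zi i \<in> borel_measurable borel"
    unfolding z_eq[abs_def] using i by measurable
  show ?thesis unfolding wpb_bid_def using i by measurable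
qed

lemma myerson:
  assumes i: "i < n" and u: "u \<in> {0..vbar i}" and u': "u' \<in> {0..vbar i}"
  shows "u * xi i u' - zi i u' \<le> u * xi i u - zi i u"
proof (cases "u' \<le> u")
  case True
  then show ?thesis using X_bounds(1)[OF i, of u' u] u u' by (auto simp: z_eq algebra_simps)
next
  case False
  then show ?thesis using X_bounds(2)[OF i, of u u'] u u' by (auto simp: z_eq algebra_simps)
qed

end



context auc begin

abbreviation "W \<equiv> wpb {..<n} vbar M A"

lemma vs_i: "v \<in> value_space {..<n} vbar \<Longrightarrow> i < n \<Longrightarrow> v i \<in> {0..vbar i}"
  unfolding value_space_def by (simp add: PiE_iff)

lemma W_meas[measurable]: "i < n \<Longrightarrow> W i \<in> borel_measurable (PiM {..<n} M)"
  unfolding wpb_def by measurable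

lemma W_nonneg: "v \<in> value_space {..<n} vbar \<Longrightarrow> i < n \<Longrightarrow> 0 \<le> W i v"
  using b_props(1)[OF _ vs_i, of i v] A01[of v i] unfolding wpb_def by auto

lemma W_IR: "ex_post_IR {..<n} vbar A W"
  unfolding ex_post_IR_def
proof (intro ballI)
  fix v i assume v: "v \<in> value_space {..<n} vbar" and i: "i \<in> {..<n}"
  then have "bi i (v i) \<le> v i" using b_props(2)[OF _ vs_i] by auto
  moreover have "A i v \<in> {0, 1}" using A01 v i by auto
  ultimately show "0 \<le> v i * A i v - W i v" unfolding wpb_def by auto
qed

lemma W_interim:
  assumes i: "i < n" and u: "u \<in> {0..vbar i}"
  shows "interim {..<n} M i (W i) u = zi i u"
proof -
  have "interim {..<n} M i (W i) u = (\<integral>w. bi i u * A i (w(i := u)) \<partial>PiM ({..<n} - {i}) M)"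
    by (simp add: interim_def wpb_def)
  also have "\<dots> = bi i u * xi i u" by (simp add: interim_alloc_def interim_def)
  finally show ?thesis using b_props(3)[OF i u] by simp
qed

lemma W_implements: "implements {..<n} vbar M A W"
  unfolding implements_def
proof (intro conjI ballI)
  show "payment_rule {..<n} vbar M W"
    unfolding payment_rule_def using W_nonneg by auto
next
  fix i u u' assume i': "i \<in> {..<n}" and u: "u \<in> {0..vbar i}" and u': "u' \<in> {0..vbar i}"
  have i: "i < n" using i' by simp
  have "interim {..<n} M i (\<lambda>v. u * A i (v(i := u')) - W i (v(i := u'))) u
      = (\<integral>w. (u - bi i u') * A i (w(i := u')) \<partial>PiM ({..<n} - {i}) M)"
    unfolding interim_def wpb_def by (simp add: left_diff_distrib)
  also have "\<dots> = (u - bi i u') * xi i u'"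
    by (simp add: interim_alloc_def interim_def)
  also have "\<dots> = u * xi i u' - zi i u'"
    using b_props(3)[OF i u'] by (simp add: left_diff_distrib)
  also have "\<dots> \<le> u * xi i u - zi i u" by (rule myerson[OF i u u'])
  also have "\<dots> = (u - bi i u) * xi i u"
    using b_props(3)[OF i u] by (simp add: left_diff_distrib)
  also have "\<dots> = (\<integral>w. (u - bi i u) * A i (w(i := u)) \<partial>PiM ({..<n} - {i}) M)"
    by (simp add: interim_alloc_def interim_def)
  also have "\<dots> = interim {..<n} M i (\<lambda>v. v i * A i v - W i v) u"
    unfolding interim_def wpb_def by (simp add: left_diff_distrib)
  finally show "interim {..<n} M i (\<lambda>v. u * A i (v(i := u')) - W i (v(i := u'))) u
      \<le> interim {..<n} M i (\<lambda>v. v i * A i v - W i v) u" .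
next
  fix i u assume i': "i \<in> {..<n}" and u: "u \<in> {0..vbar i}"
  have i: "i < n" using i' by simp
  show "integrable (PiM ({..<n} - {i}) M) (\<lambda>w. W i (w(i := u)))"
    unfolding wpb_def using x_int[OF i u] by simp
  show "interim {..<n} M i (W i) u = interim_pay {..<n} M A i u"
    by (rule W_interim[OF i u])
qed

end



definition phi :: "(real \<Rightarrow> real) \<Rightarrow> real \<Rightarrow> real" where
  "phi g x = Inf ((\<lambda>t. (g x - g t) / (x - t)) ` ({x<..} \<inter> UNIV))"

lemma phi_sub: "convex_on UNIV g \<Longrightarrow> g x + phi g x * (y - x) \<le> g y"
  unfolding phi_def by (rule convex_le_Inf_differential) auto

lemma phi_mono:
  assumes q: "convex_on UNIV g"
  shows "mono (phi g)"
proof (rule monoI)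
  fix x y :: real assume "x \<le> y"
  show "phi g x \<le> phi g y"
  proof (cases "x < y")
    case True
    have "g x + phi g x * (y-x) \<le> g y"
      by (rule phi_sub[OF q])
    then have "phi g x \<le> (g x - g y) / (x - y)"
      using \<open>x < y\<close> by (auto simp add: field_split_simps algebra_simps)
    moreover have "(g x - g y)/(x - y) \<le> phi g y"
    unfolding phi_def proof (rule cInf_greatest, auto)
      fix t :: real assume "y < t"
      have "(g x - g y) / (x - y) \<le> (g x - g t) / (x - t)"
        apply (rule convex_on_slope_le[OF q]) using \<open>y < t\<close> \<open>x < y\<close> by auto
      also have "... \<le> (g y - g t) / (y - t)"
        apply (rule convex_on_slope_le[OF q]) using \<open>y < t\<close> \<open>x < y\<close> by auto
      finally show "(g x - g y) / (x - y) \<le> (g y - g t) / (y - t)" by simp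
    qed
    ultimately show "phi g x \<le> phi g y" by auto
  next
    case False
    then have "x = y" using \<open>x \<le> y\<close> by auto
    then show ?thesis by auto
  qed
qed

lemma sum_single: "finite S \<Longrightarrow> j \<in> S \<Longrightarrow> (\<And>k. k \<in> S \<Longrightarrow> k \<noteq> j \<Longrightarrow> h k = 0) \<Longrightarrow> sum h S = (h j :: real)"
  by (subst sum.remove[of S j]) (auto intro!: sum.neutral)




context auc begin

lemma pointwise:
  fixes P :: "nat \<Rightarrow> (nat \<Rightarrow> real) \<Rightarrow> real" and g :: "real \<Rightarrow> real"
  assumes IR: "ex_post_IR {..<n} vbar A P"
    and nn: "\<And>i. i < n \<Longrightarrow> 0 \<le> P i v"
    and cvx: "convex_on UNIV g"
    and v: "v \<in> value_space {..<n} vbar"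
  shows "g (\<Sum>i<n. W i v) + (\<Sum>i<n. A i v * phi g (bi i (v i)) * (P i v - bi i (v i))) \<le> g (\<Sum>i<n. P i v)"
proof -
  have A01v: "\<And>i. i < n \<Longrightarrow> A i v = 0 \<or> A i v = 1" using A01[OF v] by auto
  have P0: "\<And>i. i < n \<Longrightarrow> A i v = 0 \<Longrightarrow> P i v = 0"
  proof -
    fix i assume i: "i < n" and a: "A i v = 0"
    have "0 \<le> v i * A i v - P i v" using IR v i unfolding ex_post_IR_def by auto
    then show "P i v = 0" using nn[OF i] a by auto
  qed
  show ?thesis
  proof (cases "\<exists>j<n. A j v = 1")
    case True
    then obtain j where j: "j < n" "A j v = 1" by auto
    have oth: "A k v = 0" if k: "k < n" "k \<noteq> j" for k
    proof (rule ccontr)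
      assume "A k v \<noteq> 0"
      then have ak: "A k v = 1" using A01v[OF k(1)] by auto
      have "(\<Sum>i\<in>{j,k}. A i v) \<le> (\<Sum>i<n. A i v)"
        by (rule sum_mono2) (use j k A01v in \<open>force+\<close>)
      then have "2 \<le> (\<Sum>i<n. A i v)" using j ak k by simp
      then show False using Asum[OF v] by simp
    qed
    have sP: "(\<Sum>i<n. P i v) = P j v"
      by (rule sum_single) (use j oth P0 in auto)
    have sW: "(\<Sum>i<n. W i v) = bi j (v j)"
      using sum_single[of "{..<n}" j "\<lambda>i. W i v"] j oth by (auto simp: wpb_def)
    have sT: "(\<Sum>i<n. A i v * phi g (bi i (v i)) * (P i v - bi i (v i))) = phi g (bi j (v j)) * (P j v - bi j (v j))"
      using sum_single[of "{..<n}" j "\<lambda>i. A i v * phi g (bi i (v i)) * (P i v - bi i (v i))"] j oth by auto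
    show ?thesis unfolding sP sW sT by (rule phi_sub[OF cvx])
  next
    case False
    then have a0: "\<And>i. i < n \<Longrightarrow> A i v = 0" using A01v by blast
    have "(\<Sum>i<n. P i v) = 0" using a0 P0 by simp
    moreover have "(\<Sum>i<n. W i v) = 0" using a0 by (simp add: wpb_def)
    moreover have "(\<Sum>i<n. A i v * phi g (bi i (v i)) * (P i v - bi i (v i))) = 0" using a0 by simp
    ultimately show ?thesis by simp
  qed
qed

end



context auc begin

lemma AE_vs: "AE v in PiM {..<n} M. v \<in> value_space {..<n} vbar"
  using AE_vals[OF subset_refl] AE_space
  by eventually_elim (simp add: value_space_def space_PiM PiE_iff)

lemma main_ineq:
  fixes P :: "nat \<Rightarrow> (nat \<Rightarrow> real) \<Rightarrow> real" and g :: "real \<Rightarrow> real"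
  assumes impl: "implements {..<n} vbar M A P" and IR: "ex_post_IR {..<n} vbar A P"
    and cvx: "convex_on UNIV g"
    and iW: "integrable (PiM {..<n} M) (\<lambda>v. g (\<Sum>i<n. W i v))"
    and iP: "integrable (PiM {..<n} M) (\<lambda>v. g (\<Sum>i<n. P i v))"
  shows "(\<integral>v. g (\<Sum>i<n. W i v) \<partial>PiM {..<n} M) \<le> (\<integral>v. g (\<Sum>i<n. P i v) \<partial>PiM {..<n} M)"
proof -
  interpret Q: prob_space "PiM {..<n} M" by (rule Q_prob) auto
  have Pm[measurable]: "\<And>i. i < n \<Longrightarrow> P i \<in> borel_measurable (PiM {..<n} M)"
    using impl unfolding implements_def payment_rule_def lessThan_iff by blast
  have Pnn: "\<And>i v. v \<in> value_space {..<n} vbar \<Longrightarrow> i < n \<Longrightarrow> 0 \<le> P i v"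
    using impl unfolding implements_def payment_rule_def lessThan_iff by blast
  have RE: "\<And>i u. i < n \<Longrightarrow> u \<in> {0..vbar i} \<Longrightarrow> integrable (PiM ({..<n} - {i}) M) (\<lambda>w. P i (w(i := u)))
      \<and> interim {..<n} M i (P i) u = zi i u"
    using impl unfolding implements_def lessThan_iff by blast
  have IRv: "\<And>i v. v \<in> value_space {..<n} vbar \<Longrightarrow> i < n \<Longrightarrow> 0 \<le> v i * A i v - P i v"
    using IR unfolding ex_post_IR_def lessThan_iff by blast
  have phim[measurable]: "phi g \<in> borel_measurable borel"
    by (rule borel_measurable_mono[OF phi_mono[OF cvx]])
  define T where "T i v = A i v * phi g (bi i (v i)) * (P i v - bi i (v i))" for i v
  have Tm[measurable]: "\<And>i. i < n \<Longrightarrow> T i \<in> borel_measurable (PiM {..<n} M)"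
    unfolding T_def by measurable
  have Pb: "P i v \<le> vbar i" if v: "v \<in> value_space {..<n} vbar" and i: "i < n" for i v
  proof -
    have "0 \<le> v i * A i v - P i v" using IRv v i by blast
    moreover have "v i * A i v \<le> vbar i" using vs_i[OF v i] A01[OF v i] by auto
    ultimately show ?thesis by simp
  qed
  have Tint: "integrable (PiM {..<n} M) (T i)" if i: "i < n" for i
  proof (rule Q.integrable_const_bound[where B="(\<bar>phi g 0\<bar> + \<bar>phi g (vbar i)\<bar>) * vbar i"])
    show "AE v in PiM {..<n} M. norm (T i v) \<le> (\<bar>phi g 0\<bar> + \<bar>phi g (vbar i)\<bar>) * vbar i"
      using AE_vs
    proof eventually_elim
      case (elim v)
      have vi: "v i \<in> {0..vbar i}" by (rule vs_i[OF elim i])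
      have b: "0 \<le> bi i (v i)" "bi i (v i) \<le> v i" using b_props[OF i vi] by auto
      have vi': "0 \<le> v i" "v i \<le> vbar i" using vi by simp_all
      have "phi g 0 \<le> phi g (bi i (v i))"
        by (rule monoD[OF phi_mono[OF cvx]]) (use b in linarith)
      moreover have "phi g (bi i (v i)) \<le> phi g (vbar i)"
        by (rule monoD[OF phi_mono[OF cvx]]) (use b vi' in linarith)
      ultimately have ph: "\<bar>phi g (bi i (v i))\<bar> \<le> \<bar>phi g 0\<bar> + \<bar>phi g (vbar i)\<bar>" by linarith
      have pb: "\<bar>P i v - bi i (v i)\<bar> \<le> vbar i"
        using Pnn[OF elim i] Pb[OF elim i] b vi' by (intro abs_leI) linarith+
      have a: "\<bar>A i v\<bar> \<le> 1" using A01[OF elim i] by auto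
      have "norm (T i v) = \<bar>A i v\<bar> * \<bar>phi g (bi i (v i))\<bar> * \<bar>P i v - bi i (v i)\<bar>"
        by (simp add: T_def abs_mult)
      also have "\<dots> \<le> 1 * (\<bar>phi g 0\<bar> + \<bar>phi g (vbar i)\<bar>) * vbar i"
      proof -
        have "\<bar>A i v\<bar> * \<bar>phi g (bi i (v i))\<bar> \<le> 1 * (\<bar>phi g 0\<bar> + \<bar>phi g (vbar i)\<bar>)"
          by (rule mult_mono[OF a ph]) simp_all
        then show ?thesis by (rule mult_mono[OF _ pb]) simp_all
      qed
      finally show ?case by simp
    qed
  qed (use i in simp)
  have Tzero: "integral\<^sup>L (PiM {..<n} M) (T i) = 0" if i: "i < n" for i
  proof -
    let ?Q = "PiM ({..<n} - {i}) M"
    have "(\<integral>u. (\<integral>w. T i (w(i := u)) \<partial>?Q) \<partial>M i) = 0"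
    proof (rule integral_eq_zero_AE)
      show "AE u in M i. (\<integral>w. T i (w(i := u)) \<partial>?Q) = 0"
        using AE_M[OF i]
      proof eventually_elim
        case (elim u)
        have "(\<integral>w. T i (w(i := u)) \<partial>?Q) = (\<integral>w. phi g (bi i u) * (P i (w(i := u)) - bi i u * A i (w(i := u))) \<partial>?Q)"
        proof (rule integral_cong_AE)
          show "(\<lambda>w. T i (w(i := u))) \<in> borel_measurable ?Q"
            using measurable_comp[OF upd_meas1[OF i] Tm[OF i]] by (simp add: comp_def)
          have "(\<lambda>w. P i (w(i := u))) \<in> borel_measurable ?Q"
            using measurable_comp[OF upd_meas1[OF i] Pm[OF i]] by (simp add: comp_def)
          then show "(\<lambda>w. phi g (bi i u) * (P i (w(i := u)) - bi i u * A i (w(i := u)))) \<in> borel_measurable ?Q"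
            using i by measurable
          show "AE w in ?Q. T i (w(i := u)) = phi g (bi i u) * (P i (w(i := u)) - bi i u * A i (w(i := u)))"
            using AE_upd[OF i elim]
          proof eventually_elim
            case (elim w)
            have "A i (w(i := u)) = 0 \<or> A i (w(i := u)) = 1" using A01[OF elim i] by auto
            moreover have "A i (w(i := u)) = 0 \<Longrightarrow> P i (w(i := u)) = 0"
            proof -
              assume a: "A i (w(i := u)) = 0"
              have "0 \<le> (w(i := u)) i * A i (w(i := u)) - P i (w(i := u))"
                using IRv[OF elim i] by simp
              then show ?thesis using Pnn[OF elim i] a by auto
            qed
            ultimately show ?case unfolding T_def by (auto simp: algebra_simps)
          qed
        qed
        also have "\<dots> = phi g (bi i u) * ((\<integral>w. P i (w(i := u)) \<partial>?Q) - bi i u * xi i u)"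
        proof -
          have ip: "integrable ?Q (\<lambda>w. P i (w(i := u)))" using RE[OF i elim] by blast
          have ia: "integrable ?Q (\<lambda>w. bi i u * A i (w(i := u)))" using x_int[OF i elim] by simp
          show ?thesis
            by (simp add: Bochner_Integration.integral_diff[OF ip ia] interim_alloc_def interim_def)
        qed
        also have "(\<integral>w. P i (w(i := u)) \<partial>?Q) = zi i u"
          using RE[OF i elim] unfolding interim_def by blast
        also have "phi g (bi i u) * (zi i u - bi i u * xi i u) = 0"
          using b_props(3)[OF i elim] by simp
        finally show ?case .
      qed
    qed
    then show ?thesis using fubini[OF i Tint[OF i]] by simp
  qed
  have iS: "integrable (PiM {..<n} M) (\<lambda>v. \<Sum>i<n. T i v)"
    by (rule Bochner_Integration.integrable_sum) (use Tint in simp)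
  have "(\<integral>v. g (\<Sum>i<n. W i v) \<partial>PiM {..<n} M) = (\<integral>v. g (\<Sum>i<n. W i v) + (\<Sum>i<n. T i v) \<partial>PiM {..<n} M)"
  proof -
    have "(\<integral>v. g (\<Sum>i<n. W i v) + (\<Sum>i<n. T i v) \<partial>PiM {..<n} M)
        = (\<integral>v. g (\<Sum>i<n. W i v) \<partial>PiM {..<n} M) + (\<integral>v. (\<Sum>i<n. T i v) \<partial>PiM {..<n} M)"
      by (rule Bochner_Integration.integral_add[OF iW iS])
    also have "(\<integral>v. (\<Sum>i<n. T i v) \<partial>PiM {..<n} M) = (\<Sum>i<n. integral\<^sup>L (PiM {..<n} M) (T i))"
      by (rule Bochner_Integration.integral_sum) (use Tint in simp)
    also have "\<dots> = 0" using Tzero by simp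
    finally show ?thesis by simp
  qed
  also have "\<dots> \<le> (\<integral>v. g (\<Sum>i<n. P i v) \<partial>PiM {..<n} M)"
  proof (rule integral_mono_AE)
    show "integrable (PiM {..<n} M) (\<lambda>v. g (\<Sum>i<n. W i v) + (\<Sum>i<n. T i v))"
      by (rule Bochner_Integration.integrable_add[OF iW iS])
    show "AE v in PiM {..<n} M. g (\<Sum>i<n. W i v) + (\<Sum>i<n. T i v) \<le> g (\<Sum>i<n. P i v)"
      using AE_vs
    proof eventually_elim
      case (elim v)
      show ?case unfolding T_def by (rule pointwise[OF IR Pnn[OF elim] cvx elim])
    qed
  qed (rule iP)
  finally show ?thesis .
qed

end

theorem mainTheorem2:
  fixes n :: nat and vbar :: "nat \<Rightarrow> real" and f :: "nat \<Rightarrow> real \<Rightarrow> real"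
    and A :: "nat \<Rightarrow> (nat \<Rightarrow> real) \<Rightarrow> real"
  assumes k_lt_n: "1 < n"
    and f_meas: "\<forall>i<n. f i \<in> borel_measurable lborel"
    and f_pos: "\<forall>i<n. \<forall>x\<in>{0..vbar i}. 0 < f i x"
    and f_norm: "\<forall>i<n. (\<integral>\<^sup>+x\<in>{0..vbar i}. ennreal (f i x) \<partial>lborel) = 1"
    and A_rule: "allocation_rule {..<n} vbar (valdist vbar f) 1 A"
    and A_impl: "implementable {..<n} vbar (valdist vbar f) A"
  shows "implements {..<n} vbar (valdist vbar f) A (wpb {..<n} vbar (valdist vbar f) A)
       \<and> ex_post_IR {..<n} vbar A (wpb {..<n} vbar (valdist vbar f) A)
       \<and> (\<forall>P (g :: real \<Rightarrow> real).
            implements {..<n} vbar (valdist vbar f) A P \<and> ex_post_IR {..<n} vbar A P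
            \<and> convex_on UNIV g
            \<and> integrable (PiM {..<n} (valdist vbar f))
                 (\<lambda>v. g (\<Sum>i<n. wpb {..<n} vbar (valdist vbar f) A i v))
            \<and> integrable (PiM {..<n} (valdist vbar f)) (\<lambda>v. g (\<Sum>i<n. P i v))
            \<longrightarrow> (\<integral>v. g (\<Sum>i<n. wpb {..<n} vbar (valdist vbar f) A i v) \<partial>PiM {..<n} (valdist vbar f))
                \<le> (\<integral>v. g (\<Sum>i<n. P i v) \<partial>PiM {..<n} (valdist vbar f)))"
proof -
  interpret auc n vbar f A by (rule auc.intro[OF f_meas f_norm A_rule A_impl])
  have m: "\<forall>P (g :: real \<Rightarrow> real).
            implements {..<n} vbar (valdist vbar f) A P \<and> ex_post_IR {..<n} vbar A P
            \<and> convex_on UNIV g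
            \<and> integrable (PiM {..<n} (valdist vbar f))
                 (\<lambda>v. g (\<Sum>i<n. wpb {..<n} vbar (valdist vbar f) A i v))
            \<and> integrable (PiM {..<n} (valdist vbar f)) (\<lambda>v. g (\<Sum>i<n. P i v))
            \<longrightarrow> (\<integral>v. g (\<Sum>i<n. wpb {..<n} vbar (valdist vbar f) A i v) \<partial>PiM {..<n} (valdist vbar f))
                \<le> (\<integral>v. g (\<Sum>i<n. P i v) \<partial>PiM {..<n} (valdist vbar f))"
  proof (intro allI impI)
    fix P and g :: "real \<Rightarrow> real"
    assume h: "implements {..<n} vbar (valdist vbar f) A P \<and> ex_post_IR {..<n} vbar A P
            \<and> convex_on UNIV g
            \<and> integrable (PiM {..<n} (valdist vbar f))
                 (\<lambda>v. g (\<Sum>i<n. wpb {..<n} vbar (valdist vbar f) A i v))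
            \<and> integrable (PiM {..<n} (valdist vbar f)) (\<lambda>v. g (\<Sum>i<n. P i v))"
    then show "(\<integral>v. g (\<Sum>i<n. wpb {..<n} vbar (valdist vbar f) A i v) \<partial>PiM {..<n} (valdist vbar f))
                \<le> (\<integral>v. g (\<Sum>i<n. P i v) \<partial>PiM {..<n} (valdist vbar f))"
      using main_ineq[of P g] by blast
  qed
  show ?thesis using W_implements W_IR m by blast
qed

end
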